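(* Let $\Phi$ be a $(3,3)$-monotone formula with $n$ clauses and $n$ variables, and let $G_\Phi$ be the graph constructed from it as described in the context. Then the complement $\overline{G_\Phi}$ has no fall colouring using more than $\frac{7}{3}n$ colours.
   Context: A $(3,3)$-monotone formula is a set $C$ of clauses over a variable set $X$, where each clause consists of three distinct (positive, unnegated) variables and each variable occurs in exactly three clauses, so $|C|=|X|=n$. The graph $G_\Phi$ has $5n$ vertices: for each clause $c\in C$ with variables $x,y,z$ (in an arbitrary fixed order) there are vertices $c(x),c(y),c(z)$ ($c$-type) and $a_1^c,a_2^c$ ($a$-type) forming the path $c(x)\,a_1^c\,c(y)\,a_2^c\,c(z)$; and for each variable $x$ occurring in clauses $c,c',c''$, the three vertices $c(x),c'(x),c''(x)$ form a triangle. There are no other edges. A colouring of a graph is a map to $\mathbb{Z}^+$ with adjacent vertices receiving distinct colours; a fall colouring is a colouring in which every vertex is adjacent to a vertex of every colour used other than its own. $\overline{G}$ denotes the complement of $G$. *)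

theory Defs
  imports Complex_Main
begin

definition monotone33 :: "'v set \<Rightarrow> 'v set set \<Rightarrow> bool" where
  "monotone33 X C \<longleftrightarrow> finite X \<and> finite C \<and>
     (\<forall>c\<in>C. c \<subseteq> X \<and> card c = 3) \<and>
     (\<forall>x\<in>X. card {c\<in>C. x \<in> c} = 3)"

definition clause_order :: "'v set set \<Rightarrow> ('v set \<Rightarrow> 'v \<times> 'v \<times> 'v) \<Rightarrow> bool" where
  "clause_order C ord \<longleftrightarrow> (\<forall>c\<in>C. case ord c of (x, y, z) \<Rightarrow> c = {x, y, z})"

datatype 'v gvert = CV "'v set" 'v | A1 "'v set" | A2 "'v set"

definition G_verts :: "'v set set \<Rightarrow> 'v gvert set" where
  "G_verts C = {CV c x | c x. c \<in> C \<and> x \<in> c} \<union> A1 ` C \<union> A2 ` C"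

text \<open>Directed list of edges before symmetrisation: path c(x) a1 c(y) a2 c(z) and triangles.\<close>
definition G_edge0 :: "'v set set \<Rightarrow> ('v set \<Rightarrow> 'v \<times> 'v \<times> 'v) \<Rightarrow> 'v gvert \<Rightarrow> 'v gvert \<Rightarrow> bool" where
  "G_edge0 C ord u w \<longleftrightarrow>
     (\<exists>c\<in>C. case ord c of (x, y, z) \<Rightarrow>
        (u = CV c x \<and> w = A1 c) \<or> (u = A1 c \<and> w = CV c y) \<or>
        (u = CV c y \<and> w = A2 c) \<or> (u = A2 c \<and> w = CV c z)) \<or>
     (\<exists>c\<in>C. \<exists>c'\<in>C. \<exists>x. c \<noteq> c' \<and> x \<in> c \<and> x \<in> c' \<and> u = CV c x \<and> w = CV c' x)"

definition G_adj :: "'v set set \<Rightarrow> ('v set \<Rightarrow> 'v \<times> 'v \<times> 'v) \<Rightarrow> 'v gvert \<Rightarrow> 'v gvert \<Rightarrow> bool" where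
  "G_adj C ord u w \<longleftrightarrow> G_edge0 C ord u w \<or> G_edge0 C ord w u"

definition compl_adj :: "'a set \<Rightarrow> ('a \<Rightarrow> 'a \<Rightarrow> bool) \<Rightarrow> 'a \<Rightarrow> 'a \<Rightarrow> bool" where
  "compl_adj V E u w \<longleftrightarrow> u \<in> V \<and> w \<in> V \<and> u \<noteq> w \<and> \<not> E u w"

definition colouring :: "'a set \<Rightarrow> ('a \<Rightarrow> 'a \<Rightarrow> bool) \<Rightarrow> ('a \<Rightarrow> nat) \<Rightarrow> bool" where
  "colouring V E f \<longleftrightarrow> (\<forall>v\<in>V. f v > 0) \<and> (\<forall>u\<in>V. \<forall>w\<in>V. E u w \<longrightarrow> f u \<noteq> f w)"

definition fall_colouring :: "'a set \<Rightarrow> ('a \<Rightarrow> 'a \<Rightarrow> bool) \<Rightarrow> ('a \<Rightarrow> nat) \<Rightarrow> bool" where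
  "fall_colouring V E f \<longleftrightarrow> colouring V E f \<and>
     (\<forall>v\<in>V. \<forall>k\<in>f ` V. k \<noteq> f v \<longrightarrow> (\<exists>u\<in>V. E v u \<and> f u = k))"

end

theory Submission
  imports Defs
begin

lemma adj_sym: "G_adj C ord u w = G_adj C ord w u"
  by (auto simp: G_adj_def)

lemma adj_neq: "G_adj C ord u w \<Longrightarrow> u \<noteq> w"
  unfolding G_adj_def G_edge0_def by (auto simp: case_prod_beta)

lemma adj_CV: "G_adj C ord (CV c x) (CV c' y) \<Longrightarrow> x = y \<and> c \<noteq> c'"
  by (auto simp: G_adj_def G_edge0_def split: prod.splits)

lemma adj_CV2: "c\<in>C \<Longrightarrow> c'\<in>C \<Longrightarrow> c\<noteq>c' \<Longrightarrow> x\<in>c \<Longrightarrow> x\<in>c' \<Longrightarrow> G_adj C ord (CV c x) (CV c' x)"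
  by (auto simp: G_adj_def G_edge0_def)

lemma has_nb:
  assumes "clause_order C ord" "v \<in> G_verts C"
  shows "\<exists>u\<in>G_verts C. G_adj C ord v u"
proof -
  consider (cv) c x where "v = CV c x" "c \<in> C" "x \<in> c" | (a1) c where "v = A1 c" "c \<in> C"
    | (a2) c where "v = A2 c" "c \<in> C"
    using assms(2) by (auto simp: G_verts_def)
  then show ?thesis
  proof cases
    case cv
    obtain a b d where o: "ord c = (a,b,d)" by (cases "ord c") auto
    with assms(1) cv have cc: "c = {a,b,d}" by (auto simp: clause_order_def)
    have "A1 c \<in> G_verts C" "A2 c \<in> G_verts C" using cv by (auto simp: G_verts_def)
    moreover have "x = a \<or> x = b \<or> x = d" using cv cc by auto
    moreover have "G_edge0 C ord (CV c a) (A1 c)" "G_edge0 C ord (A1 c) (CV c b)"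
      "G_edge0 C ord (A2 c) (CV c d)"
      using cv o unfolding G_edge0_def by force+
    ultimately show ?thesis using cv by (auto simp: G_adj_def)
  next
    case a1
    obtain a b d where o: "ord c = (a,b,d)" by (cases "ord c") auto
    with assms(1) a1 have cc: "c = {a,b,d}" by (auto simp: clause_order_def)
    have "CV c a \<in> G_verts C" using a1 cc by (auto simp: G_verts_def)
    moreover have "G_edge0 C ord (CV c a) (A1 c)" using a1 o unfolding G_edge0_def by force
    ultimately show ?thesis using a1 by (auto simp: G_adj_def)
  next
    case a2
    obtain a b d where o: "ord c = (a,b,d)" by (cases "ord c") auto
    with assms(1) a2 have cc: "c = {a,b,d}" by (auto simp: clause_order_def)
    have "CV c d \<in> G_verts C" using a2 cc by (auto simp: G_verts_def)
    then show ?thesis using a2 o by (auto simp: G_adj_def G_edge0_def)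
  qed
qed

lemma card_A:
  assumes "finite C"
  shows "card (A1 ` C \<union> A2 ` C) = 2 * card C"
proof -
  have "card (A1 ` C \<union> A2 ` C) = card (A1 ` C) + card (A2 ` C)"
    by (rule card_Un_disjoint) (use assms in auto)
  also have "\<dots> = card C + card C"
    by (simp add: card_image inj_on_def)
  finally show ?thesis by simp
qed

lemma card_V:
  assumes "monotone33 X C"
  shows "card (G_verts C) = 5 * card C"
proof -
  have fC: "finite C" and c3: "\<forall>c\<in>C. c \<subseteq> X \<and> card c = 3" and fX: "finite X"
    using assms by (auto simp: monotone33_def)
  have fc: "\<forall>c\<in>C. finite c" using c3 fX finite_subset by blast
  define S where "S = {CV c x | c x. c \<in> C \<and> x \<in> c}"
  have S: "S = (\<lambda>(c,x). CV c x) ` (SIGMA c:C. c)" by (auto simp: S_def)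
  have "card S = card (SIGMA c:C. c)"
    unfolding S by (rule card_image) (auto simp: inj_on_def)
  also have "\<dots> = (\<Sum>c\<in>C. card c)" using fC fc by (simp add: card_SigmaI)
  also have "\<dots> = 3 * card C" using c3 by simp
  finally have cS: "card S = 3 * card C" .
  have fS: "finite S" unfolding S using fC fc by auto
  have "G_verts C = S \<union> (A1 ` C \<union> A2 ` C)" by (auto simp: G_verts_def S_def)
  moreover have "card (S \<union> (A1 ` C \<union> A2 ` C)) = card S + card (A1 ` C \<union> A2 ` C)"
    by (rule card_Un_disjoint) (use fS fC in \<open>auto simp: S_def\<close>)
  ultimately show ?thesis using cS card_A[OF fC] by simp
qed

lemma card_fibres:
  assumes "finite S" "finite T" "g ` S \<subseteq> T"
  shows "card S = (\<Sum>y\<in>T. card {x\<in>S. g x = y})"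
  using sum.group[OF assms, of "\<lambda>_. 1::nat"] by simp

theorem mainTheorem19:
  fixes X :: "'v set" and C :: "'v set set" and ord :: "'v set \<Rightarrow> 'v \<times> 'v \<times> 'v"
    and f :: "'v gvert \<Rightarrow> nat"
  assumes "monotone33 X C"
    and "clause_order C ord"
    and "fall_colouring (G_verts C) (compl_adj (G_verts C) (G_adj C ord)) f"
  shows "real (card (f ` G_verts C)) \<le> 7 / 3 * real (card C)"
proof -
  define V where "V = G_verts C"
  define A where "A = A1 ` C \<union> A2 ` C"
  define P where "P = f ` V"
  define K where "K k = {v\<in>V. f v = k}" for k
  define KA where "KA k = {v\<in>A. f v = k}" for k
  have fC: "finite C" and c3: "\<forall>c\<in>C. c \<subseteq> X \<and> card c = 3"
    and x3: "\<forall>x\<in>X. card {c\<in>C. x \<in> c} = 3"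
    using assms(1) by (auto simp: monotone33_def)
  have cV: "card V = 5 * card C" using card_V[OF assms(1)] by (simp add: V_def)
  have cA: "card A = 2 * card C" using card_A[OF fC] by (simp add: A_def)
  have fV: "finite V"
  proof (cases "C = {}")
    case True then show ?thesis by (simp add: V_def G_verts_def)
  next
    case False then have "card C > 0" using fC by auto
    then show ?thesis using cV by (metis card.infinite mult_is_0 neq0_conv zero_neq_numeral)
  qed
  have AV: "A \<subseteq> V" by (auto simp: A_def V_def G_verts_def)
  have fA: "finite A" using fV AV finite_subset by blast
  have col: "\<And>u w. u \<in> V \<Longrightarrow> w \<in> V \<Longrightarrow> u \<noteq> w \<Longrightarrow> f u = f w \<Longrightarrow> G_adj C ord u w"
    using assms(3) by (auto simp: fall_colouring_def colouring_def compl_adj_def V_def)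
  have fall: "\<And>v k. v \<in> V \<Longrightarrow> k \<in> f ` V \<Longrightarrow> k \<noteq> f v \<Longrightarrow>
      \<exists>u\<in>V. \<not> G_adj C ord v u \<and> f u = k"
    using assms(3) unfolding fall_colouring_def compl_adj_def V_def by blast
  have key: "3 \<le> card (K k) + card (KA k)" if kP: "k \<in> P" for k
  proof (rule ccontr)
    assume lt: "\<not> ?thesis"
    have fK: "finite (K k)" using fV by (simp add: K_def)
    have fKA: "finite (KA k)" using fA by (simp add: KA_def)
    obtain v0 where v0: "v0 \<in> V" "f v0 = k" using kP by (auto simp: P_def)
    have "K k \<noteq> {}" using v0 by (auto simp: K_def)
    then have "card (K k) \<noteq> 0" using fK by simp
    moreover have "KA k \<noteq> {} \<Longrightarrow> card (KA k) \<ge> 1" using fKA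
      by (simp add: Suc_leI card_gt_0_iff)
    ultimately have "card (K k) < 3" "card (K k) \<noteq> 0" "KA k \<noteq> {} \<Longrightarrow> card (K k) < 2"
      using lt by auto
    then consider "card (K k) = 1" | "card (K k) = 2" "KA k = {}"
      by linarith
    then show False
    proof cases
      case 1
      then obtain v where Kv: "K k = {v}" using card_1_singletonE by blast
      then have v: "v \<in> V" "f v = k" by (auto simp: K_def)
      obtain u where u: "u \<in> V" "G_adj C ord v u" using has_nb[OF assms(2)] v by (auto simp: V_def)
      have "u \<noteq> v" using adj_neq u by metis
      then have "f u \<noteq> k" using Kv u by (auto simp: K_def)
      then obtain w where w: "w \<in> V" "\<not> G_adj C ord u w" "f w = k"
        using fall[of u k] u kP by (auto simp: P_def)
      then have "w = v" using Kv by (auto simp: K_def)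
      then show False using w u adj_sym by metis
    next
      case 2
      then obtain p q where pq: "K k = {p,q}" "p \<noteq> q" using card_2_iff by metis
      then have pqV: "p \<in> V" "q \<in> V" "f p = k" "f q = k" by (auto simp: K_def)
      have "p \<notin> A" "q \<notin> A" using 2(2) pqV by (auto simp: KA_def)
      then obtain c x c' y where p: "p = CV c x" "c \<in> C" "x \<in> c" and q: "q = CV c' y" "c' \<in> C" "y \<in> c'"
        using pqV by (auto simp: V_def A_def G_verts_def)
      have "G_adj C ord p q" using col pqV pq by metis
      then have xy: "x = y" "c \<noteq> c'" using adj_CV p q by metis+
      have xX: "x \<in> X" using c3 p by blast
      have "card {d\<in>C. x \<in> d} = 3" using x3 xX by blast
      moreover have "{c,c'} \<subseteq> {d\<in>C. x \<in> d}" using p q xy by auto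
      moreover have "card {c,c'} = 2" using xy by simp
      ultimately have "\<not> {d\<in>C. x \<in> d} \<subseteq> {c,c'}"
        by (metis card_mono finite.emptyI finite_insert numeral_le_iff semiring_norm(69,72) subset_antisym numeral_eq_iff semiring_norm(89))
      then obtain d where d: "d \<in> C" "x \<in> d" "d \<noteq> c" "d \<noteq> c'" by blast
      define r where "r = CV d x"
      have rV: "r \<in> V" using d by (auto simp: r_def V_def G_verts_def)
      have "r \<notin> K k" using pq p q d xy by (auto simp: r_def)
      then have "f r \<noteq> k" using rV by (auto simp: K_def)
      then obtain w where w: "w \<in> V" "\<not> G_adj C ord r w" "f w = k"
        using fall[of r k] rV kP by (auto simp: P_def)
      then have "w = p \<or> w = q" using pq by (auto simp: K_def)
      moreover have "G_adj C ord r p" "G_adj C ord r q"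
        using adj_CV2[of d C c x ord] adj_CV2[of d C c' x ord] d p q xy by (simp_all add: r_def)
      ultimately show False using w by blast
    qed
  qed
  have fP: "finite P" using fV by (simp add: P_def)
  have s1: "card V = (\<Sum>k\<in>P. card (K k))"
    unfolding K_def by (rule card_fibres[OF fV fP]) (simp add: P_def)
  have s2: "card A = (\<Sum>k\<in>P. card (KA k))"
    unfolding KA_def by (rule card_fibres[OF fA fP]) (use AV in \<open>auto simp: P_def\<close>)
  have "3 * card P = (\<Sum>k\<in>P. 3)" by simp
  also have "\<dots> \<le> (\<Sum>k\<in>P. card (K k) + card (KA k))"
    by (rule sum_mono) (use key in auto)
  also have "\<dots> = card V + card A" using s1 s2 by (simp add: sum.distrib)
  finally have "3 * card P \<le> 7 * card C" using cV cA by simp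
  then have "3 * real (card P) \<le> 7 * real (card C)" by linarith
  then show ?thesis by (simp add: P_def V_def)
qed

end
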